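(* Let $F=\mathrm{id}_{K_{\mathrm{cmn}}}\otimes(R\otimes_{R_{\mathrm p}}F_{\mathrm p}):\widehat{\gamma}_{\mathrm{par}}\to\widehat{\gamma}_{\mathrm{vir}}$ and $G=\mathrm{id}_{K_{\mathrm{cmn}}}\otimes(R\otimes_{R_{\mathrm p}}G_{\mathrm p}):\widehat{\gamma}_{\mathrm{vir}}\to\widehat{\gamma}_{\mathrm{hor}}$ be the saddle morphisms, where $F_{\mathrm p}$ is given on the even part by $\begin{pmatrix}0&1\\ q_2^2-q_1^2C&0\end{pmatrix}$ and on the odd part by $\begin{pmatrix}q_2&-q_1\\ q_1C&-q_2\end{pmatrix}$, and $G_{\mathrm p}$ is given on the even part by $\begin{pmatrix}0&1\\ p_2^2-p_1^2C&0\end{pmatrix}$ and on the odd part by $\begin{pmatrix}p_2&-p_1\\ p_1C&-p_2\end{pmatrix}$. Then the composition is null-homotopic: $G\circ F\simeq 0$.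
   Context: Fix $N\ge1$, $w(x)=x^{2N+1}$, $W(x,y)=xy^2+x^{2N+1}$, iterated divided differences $w(x_1,\dots,x_n)=\frac{w(x_1,\dots,x_{n-2},x_{n-1})-w(x_1,\dots,x_{n-2},x_n)}{x_{n-1}-x_n}$. $R=\mathbb{Q}[x_1,\dots,x_4,y_1,\dots,y_4]$, $W_4=\sum W(x_i,y_i)$. Matrix factorizations of $V$: $\mathbb{Z}/2$-graded free modules with odd $D$, $D^2=V$; a morphism is null-homotopic ($\simeq0$) if it equals $DX+XD$ for some odd $R$-linear $X$. $A(i,j)$ is the Koszul matrix factorization (tensor product over $R$ of $Re_0\oplus Re_1$, $De_0=be_1$, $De_1=ae_0$ for each row $(a\mid b)$) with rows $(y_j+y_i\mid x_j(y_j-y_i))$, $(x_j+x_i\mid y_i^2+w(-x_i,x_j))$; $\widehat{\gamma}_{\mathrm{par}}=A(1,3)\otimes A(2,4)$, $\widehat{\gamma}_{\mathrm{vir}}=A(1,4)\otimes A(2,3)$, $\widehat{\gamma}_{\mathrm{hor}}=A(1,2)\otimes A(3,4)$. $R_{\mathrm p}=\mathbb{Q}[p_1,p_2,q_1,q_2,r_1,r_2,C]$, $W_{4,\mathrm p}=p_1q_2r_2+q_1p_2r_2+r_1p_2q_2+p_1q_1r_1C$. Proper matrix factorizations, each of the form $R_{\mathrm p}^2$ (odd) $\xrightarrow{P}$ $R_{\mathrm p}^2$ (even) $\xrightarrow{Q}$ $R_{\mathrm p}^2$ (odd): $\widehat{\gamma}_{\mathrm{par,p}}$ with $P=\begin{pmatrix}p_2&p_1\\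 q_2r_2+q_1r_1C&-(q_2r_1+q_1r_2)\end{pmatrix}$, $Q=\begin{pmatrix}q_1r_2+q_2r_1&p_1\\ q_2r_2+q_1r_1C&-p_2\end{pmatrix}$; $\widehat{\gamma}_{\mathrm{vir,p}}$ with $P=\begin{pmatrix}r_2&r_1\\ p_2q_2+p_1q_1C&-(p_1q_2+p_2q_1)\end{pmatrix}$, $Q=\begin{pmatrix}p_1q_2+p_2q_1&r_1\\ p_2q_2+p_1q_1C&-r_2\end{pmatrix}$; $\widehat{\gamma}_{\mathrm{hor,p}}$ with $P=\begin{pmatrix}q_2&q_1\\ p_2r_2+p_1r_1C&-(p_1r_2+p_2r_1)\end{pmatrix}$, $Q=\begin{pmatrix}p_1r_2+p_2r_1&q_1\\ p_2r_2+p_1r_1C&-q_2\end{pmatrix}$. $\phi_{\mathrm p}:R_{\mathrm p}\to R$: $p_1\mapsto x_2+x_4$, $q_1\mapsto x_3+x_4$, $r_1\mapsto x_1+x_4$, $p_2\mapsto y_2+y_4$, $q_2\mapsto y_3+y_4$, $r_2\mapsto y_1+y_4$, $C\mapsto w(x_1,x_2,-x_3,x_4)+w(x_1,-x_1,x_2,x_4)+w(x_1,-x_1,-x_2,x_4)$; $R\otimes_{R_{\mathrm p}}$ is base change along $\phi_{\mathrm p}$. $K_{\mathrm{cmn}}$ is the Koszul matrix factorization with rows $(x_1+x_2+x_3+x_4\mid A)$, $(y_1+\dots+y_4\mid B)$, $A=-(y_3+y_4)(y_1+y_2+y_4)-y_1y_2+w(-x_1,x_3)+(x_2+x_4)w(x_1,x_2,-x_3)-(x_2+x_4)(x_1+x_4)(w(x_1,-x_1,x_2,x_4)+w(x_1,-x_1,-x_2,x_4))$,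 $B=x_1y_1+x_2y_2+x_3y_3-x_4y_4$; $K_{\mathrm{cmn}}\otimes_R(R\otimes_{R_{\mathrm p}}\widehat{\gamma}_{\bullet,\mathrm p})\cong\widehat{\gamma}_\bullet$ for $\bullet\in\{\mathrm{par},\mathrm{vir},\mathrm{hor}\}$, and $F,G$ are regarded as morphisms between the $\widehat{\gamma}_\bullet$ via these isomorphisms. *)

theory Defs
  imports "HOL-Library.Poly_Mapping" "Jordan_Normal_Form.Matrix"
begin

text \<open>Polynomials over Q in the variables Var 0, Var 1, ... ; x_i = Var (i-1), y_i = Var (i+3).
  Elements of R proper are those whose monomials only involve the variables 0..7.\<close>

type_synonym R = "(nat \<Rightarrow>\<^sub>0 nat) \<Rightarrow>\<^sub>0 rat"

definition Var :: "nat \<Rightarrow> R" where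
  "Var i = Poly_Mapping.single (Poly_Mapping.single i 1) 1"

definition xv :: "nat \<Rightarrow> R" where "xv i = Var (i - 1)"
definition yv :: "nat \<Rightarrow> R" where "yv i = Var (i + 3)"

definition in_R :: "R \<Rightarrow> bool" where
  "in_R f \<longleftrightarrow> (\<forall>m\<in>Poly_Mapping.keys f. Poly_Mapping.keys m \<subseteq> {..<8})"

section \<open>Iterated divided differences of w(x) = x^(2N+1)\<close>

definition divq :: "R \<Rightarrow> R \<Rightarrow> R" where
  "divq n d = (SOME q. d * q = n)"

definition wd1 :: "nat \<Rightarrow> R \<Rightarrow> R" where
  "wd1 N a = a ^ (2 * N + 1)"
definition wd2 :: "nat \<Rightarrow> R \<Rightarrow> R \<Rightarrow> R" where
  "wd2 N a b = divq (wd1 N a - wd1 N b) (a - b)"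
definition wd3 :: "nat \<Rightarrow> R \<Rightarrow> R \<Rightarrow> R \<Rightarrow> R" where
  "wd3 N a b c = divq (wd2 N a b - wd2 N a c) (b - c)"
definition wd4 :: "nat \<Rightarrow> R \<Rightarrow> R \<Rightarrow> R \<Rightarrow> R \<Rightarrow> R" where
  "wd4 N a b c d = divq (wd3 N a b c - wd3 N a b d) (c - d)"

section \<open>Generic matrix-factorization constructions (column-vector convention)\<close>

definition kron :: "'a::semiring_1 mat \<Rightarrow> 'a mat \<Rightarrow> 'a mat" where
  "kron A B = mat (dim_row A * dim_row B) (dim_col A * dim_col B)
     (\<lambda>(i, j). A $$ (i div dim_row B, j div dim_col B) * B $$ (i mod dim_row B, j mod dim_col B))"

text \<open>Grading operator of a Z/2-graded free module of rank n with parity function par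
  (par i = True means basis vector i is odd).\<close>
definition gsign :: "nat \<Rightarrow> (nat \<Rightarrow> bool) \<Rightarrow> 'a::ring_1 mat" where
  "gsign n par = mat n n (\<lambda>(i, j). if i = j then (if par i then - 1 else 1) else 0)"

definition tensor_D :: "'a::comm_ring_1 mat \<Rightarrow> (nat \<Rightarrow> bool) \<Rightarrow> 'a mat \<Rightarrow> 'a mat" where
  "tensor_D DA parA DB = kron DA (1\<^sub>m (dim_row DB)) + kron (gsign (dim_row DA) parA) DB"

definition tensor_par :: "(nat \<Rightarrow> bool) \<Rightarrow> nat \<Rightarrow> (nat \<Rightarrow> bool) \<Rightarrow> nat \<Rightarrow> bool" where
  "tensor_par parA nB parB i = (parA (i div nB) \<noteq> parB (i mod nB))"

text \<open>Rank-one Koszul factorization for a row (a | b): basis e0 (even), e1 (odd),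
  D e0 = b e1, D e1 = a e0.\<close>
definition koszul1 :: "'a::zero \<Rightarrow> 'a \<Rightarrow> 'a mat" where
  "koszul1 a b = mat 2 2 (\<lambda>(i, j). if i = 0 \<and> j = 1 then a else if i = 1 \<and> j = 0 then b else 0)"

definition par_koszul1 :: "nat \<Rightarrow> bool" where "par_koszul1 i = (i = 1)"

definition koszul2 :: "'a::comm_ring_1 \<Rightarrow> 'a \<Rightarrow> 'a \<Rightarrow> 'a \<Rightarrow> 'a mat" where
  "koszul2 a1 b1 a2 b2 = tensor_D (koszul1 a1 b1) par_koszul1 (koszul1 a2 b2)"

definition par_koszul2 :: "nat \<Rightarrow> bool" where
  "par_koszul2 = tensor_par par_koszul1 2 par_koszul1"

text \<open>A proper matrix factorization R^2 (odd) --P--> R^2 (even) --Q--> R^2 (odd):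
  basis indices 0,1 even, 2,3 odd; D = [[0,P],[Q,0]].\<close>
definition mf22 :: "'a::zero mat \<Rightarrow> 'a mat \<Rightarrow> 'a mat" where
  "mf22 P Q = four_block_mat (0\<^sub>m 2 2) P Q (0\<^sub>m 2 2)"

definition par22 :: "nat \<Rightarrow> bool" where "par22 i = (2 \<le> i)"

definition mor22 :: "'a::zero mat \<Rightarrow> 'a mat \<Rightarrow> 'a mat" where
  "mor22 Fe Fo = four_block_mat Fe (0\<^sub>m 2 2) (0\<^sub>m 2 2) Fo"

definition mat22 :: "'a \<Rightarrow> 'a \<Rightarrow> 'a \<Rightarrow> 'a \<Rightarrow> 'a mat" where
  "mat22 a b c d = mat 2 2 (\<lambda>(i, j). if i = 0 then (if j = 0 then a else b) else (if j = 0 then c else d))"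

section \<open>The proper factorizations over R_p (as generic matrices in p1 p2 q1 q2 r1 r2 C)\<close>

definition gpar_p :: "'a::comm_ring_1 \<Rightarrow> 'a \<Rightarrow> 'a \<Rightarrow> 'a \<Rightarrow> 'a \<Rightarrow> 'a \<Rightarrow> 'a \<Rightarrow> 'a mat" where
  "gpar_p p1 p2 q1 q2 r1 r2 C = mf22
     (mat22 p2 p1 (q2*r2 + q1*r1*C) (- (q2*r1 + q1*r2)))
     (mat22 (q1*r2 + q2*r1) p1 (q2*r2 + q1*r1*C) (- p2))"

definition gvir_p :: "'a::comm_ring_1 \<Rightarrow> 'a \<Rightarrow> 'a \<Rightarrow> 'a \<Rightarrow> 'a \<Rightarrow> 'a \<Rightarrow> 'a \<Rightarrow> 'a mat" where
  "gvir_p p1 p2 q1 q2 r1 r2 C = mf22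
     (mat22 r2 r1 (p2*q2 + p1*q1*C) (- (p1*q2 + p2*q1)))
     (mat22 (p1*q2 + p2*q1) r1 (p2*q2 + p1*q1*C) (- r2))"

definition ghor_p :: "'a::comm_ring_1 \<Rightarrow> 'a \<Rightarrow> 'a \<Rightarrow> 'a \<Rightarrow> 'a \<Rightarrow> 'a \<Rightarrow> 'a \<Rightarrow> 'a mat" where
  "ghor_p p1 p2 q1 q2 r1 r2 C = mf22
     (mat22 q2 q1 (p2*r2 + p1*r1*C) (- (p1*r2 + p2*r1)))
     (mat22 (p1*r2 + p2*r1) q1 (p2*r2 + p1*r1*C) (- q2))"

definition Fsad_p :: "'a::comm_ring_1 \<Rightarrow> 'a \<Rightarrow> 'a \<Rightarrow> 'a \<Rightarrow> 'a \<Rightarrow> 'a \<Rightarrow> 'a \<Rightarrow> 'a mat" where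
  "Fsad_p p1 p2 q1 q2 r1 r2 C = mor22
     (mat22 0 1 (q2^2 - q1^2*C) 0) (mat22 q2 (- q1) (q1*C) (- q2))"

definition Gsad_p :: "'a::comm_ring_1 \<Rightarrow> 'a \<Rightarrow> 'a \<Rightarrow> 'a \<Rightarrow> 'a \<Rightarrow> 'a \<Rightarrow> 'a \<Rightarrow> 'a mat" where
  "Gsad_p p1 p2 q1 q2 r1 r2 C = mor22
     (mat22 0 1 (p2^2 - p1^2*C) 0) (mat22 p2 (- p1) (p1*C) (- p2))"

definition phiC :: "nat \<Rightarrow> R" where
  "phiC N = wd4 N (xv 1) (xv 2) (- xv 3) (xv 4) + wd4 N (xv 1) (- xv 1) (xv 2) (xv 4)
          + wd4 N (xv 1) (- xv 1) (- xv 2) (xv 4)"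

text \<open>R \<otimes>_{R_p} M for a generic construction M p1 p2 q1 q2 r1 r2 C: substitute the images.\<close>
definition base_change ::
  "(R \<Rightarrow> R \<Rightarrow> R \<Rightarrow> R \<Rightarrow> R \<Rightarrow> R \<Rightarrow> R \<Rightarrow> R mat) \<Rightarrow> nat \<Rightarrow> R mat" where
  "base_change M N = M (xv 2 + xv 4) (yv 2 + yv 4) (xv 3 + xv 4) (yv 3 + yv 4)
                       (xv 1 + xv 4) (yv 1 + yv 4) (phiC N)"

definition A_cmn :: "nat \<Rightarrow> R" where
  "A_cmn N = - (yv 3 + yv 4) * (yv 1 + yv 2 + yv 4) - yv 1 * yv 2 + wd2 N (- xv 1) (xv 3)
     + (xv 2 + xv 4) * wd3 N (xv 1) (xv 2) (- xv 3)
     - (xv 2 + xv 4) * (xv 1 + xv 4) * (wd4 N (xv 1) (- xv 1) (xv 2) (xv 4) + wd4 N (xv 1) (- xv 1) (- xv 2) (xv 4))"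

definition B_cmn :: R where
  "B_cmn = xv 1 * yv 1 + xv 2 * yv 2 + xv 3 * yv 3 - xv 4 * yv 4"

definition K_cmn :: "nat \<Rightarrow> R mat" where
  "K_cmn N = koszul2 (xv 1 + xv 2 + xv 3 + xv 4) (A_cmn N) (yv 1 + yv 2 + yv 3 + yv 4) B_cmn"

section \<open>The factorizations K_cmn \<otimes> (R \<otimes>_{R_p} gamma_p) (\<cong> gamma-hat) and the saddle morphisms\<close>

definition D_total :: "nat \<Rightarrow> (R \<Rightarrow> R \<Rightarrow> R \<Rightarrow> R \<Rightarrow> R \<Rightarrow> R \<Rightarrow> R \<Rightarrow> R mat) \<Rightarrow> R mat" where
  "D_total N gp = tensor_D (K_cmn N) par_koszul2 (base_change gp N)"

definition par_total :: "nat \<Rightarrow> bool" where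
  "par_total = tensor_par par_koszul2 4 par22"

definition F_sad :: "nat \<Rightarrow> R mat" where
  "F_sad N = kron (1\<^sub>m 4) (base_change Fsad_p N)"
definition G_sad :: "nat \<Rightarrow> R mat" where
  "G_sad N = kron (1\<^sub>m 4) (base_change Gsad_p N)"

definition null_homotopic :: "nat \<Rightarrow> (nat \<Rightarrow> bool) \<Rightarrow> R mat \<Rightarrow> R mat \<Rightarrow> R mat \<Rightarrow> bool" where
  "null_homotopic n par Dsrc Dtgt f \<longleftrightarrow>
     (\<exists>X \<in> carrier_mat n n.
        (\<forall>i<n. \<forall>j<n. in_R (X $$ (i, j))) \<and>
        (\<forall>i<n. \<forall>j<n. par i = par j \<longrightarrow> X $$ (i, j) = 0) \<and>
        f = Dtgt * X + X * Dsrc)"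

end

theory Submission
  imports Defs
begin


lemma kron_carrier[simp]: "kron A B \<in> carrier_mat (dim_row A * dim_row B) (dim_col A * dim_col B)"
  by (simp add: kron_def)
lemma kron_dims[simp]: "dim_row (kron A B) = dim_row A * dim_row B" "dim_col (kron A B) = dim_col A * dim_col B"
  by (simp_all add: kron_def)
lemma kron_index[simp]: "i < dim_row A * dim_row B \<Longrightarrow> j < dim_col A * dim_col B \<Longrightarrow>
  kron A B $$ (i,j) = A $$ (i div dim_row B, j div dim_col B) * B $$ (i mod dim_row B, j mod dim_col B)"
  by (simp add: kron_def)

lemma mod_lt_h: "i < a * (m::nat) \<Longrightarrow> i mod m < m"
  by (cases "m = 0") auto
lemma div_lt_h: "i < a * (m::nat) \<Longrightarrow> i div m < a"
  by (simp add: less_mult_imp_div_less)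

lemma sum_split_mult: fixes f :: "nat \<Rightarrow> 'a::comm_monoid_add"
  shows "(\<Sum>k<a*b. f k) = (\<Sum>u<a. \<Sum>v<b. f (u*b+v))"
proof -
  have bij: "bij_betw (\<lambda>(u,v). u*b+v) ({..<a} \<times> {..<b}) {..<a*b}"
  proof (rule bij_betwI[where g="\<lambda>k. (k div b, k mod b)"])
    show "(\<lambda>(u,v). u*b+v) \<in> {..<a} \<times> {..<b} \<rightarrow> {..<a*b}"
    proof
      fix x assume "x \<in> {..<a} \<times> {..<b}"
      then obtain u v where x: "x = (u,v)" "u < a" "v < b" by auto
      have "u*b + v < u*b + b" using x by simp
      also have "\<dots> = Suc u * b" by simp
      also have "\<dots> \<le> a * b" using x by (intro mult_le_mono1) simp
      finally show "(\<lambda>(u,v). u*b+v) x \<in> {..<a*b}" using x by simp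
    qed
    show "(\<lambda>k. (k div b, k mod b)) \<in> {..<a*b} \<rightarrow> {..<a} \<times> {..<b}"
    proof
      fix k assume k: "k \<in> {..<a*b}"
      then have "b > 0" by (cases b) auto
      then show "(k div b, k mod b) \<in> {..<a} \<times> {..<b}" using k
        by (auto simp: less_mult_imp_div_less)
    qed
  qed auto
  have "(\<Sum>k<a*b. f k) = (\<Sum>x\<in>{..<a} \<times> {..<b}. f ((\<lambda>(u,v). u*b+v) x))"
    using sum.reindex_bij_betw[OF bij, of f] by simp
  also have "\<dots> = (\<Sum>u<a. \<Sum>v<b. f (u*b+v))"
    by (simp add: sum.cartesian_product split_def)
  finally show ?thesis .
qed

lemma kron_mult:
  fixes A :: "'a::comm_semiring_1 mat"
  assumes A: "A \<in> carrier_mat m n" and B: "B \<in> carrier_mat p q" and C: "C \<in> carrier_mat n r" and D: "D \<in> carrier_mat q s"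
    and pos: "q > 0"
  shows "kron A B * kron C D = kron (A * C) (B * D)"
proof (rule eq_matI)
  fix i j assume i: "i < dim_row (kron (A * C) (B * D))" and j: "j < dim_col (kron (A * C) (B * D))"
  from i j A B C D have i': "i < m * p" and j': "j < r * s" by auto
  have ip: "i div p < m" "i mod p < p" using i' by (auto simp: div_lt_h mod_lt_h) 
  have jp: "j div s < r" "j mod s < s" using j' by (auto simp: div_lt_h mod_lt_h)
  have "(kron A B * kron C D) $$ (i,j) = (\<Sum>k<n*q. kron A B $$ (i,k) * kron C D $$ (k,j))"
    using A B C D i' j' by (simp add: scalar_prod_def atLeast0LessThan)
  also have "\<dots> = (\<Sum>u<n. \<Sum>v<q. kron A B $$ (i,u*q+v) * kron C D $$ (u*q+v,j))"
    by (rule sum_split_mult)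
  also have "\<dots> = (\<Sum>u<n. \<Sum>v<q. (A $$ (i div p, u) * C $$ (u, j div s)) * (B $$ (i mod p, v) * D $$ (v, j mod s)))"
  proof (intro sum.cong refl)
    fix u v assume u: "u \<in> {..<n}" and v: "v \<in> {..<q}"
    have lt: "u*q+v < n*q"
    proof -
      have "u*q + v < u*q + q" using v by simp
      also have "\<dots> = Suc u * q" by simp
      also have "\<dots> \<le> n * q" using u by (intro mult_le_mono1) simp
      finally show ?thesis .
    qed
    show "kron A B $$ (i,u*q+v) * kron C D $$ (u*q+v,j) = (A $$ (i div p, u) * C $$ (u, j div s)) * (B $$ (i mod p, v) * D $$ (v, j mod s))"
      using A B C D i' j' lt pos u v by (simp add: ac_simps)
  qed
  also have "\<dots> = (\<Sum>u<n. A $$ (i div p, u) * C $$ (u, j div s)) * (\<Sum>v<q. B $$ (i mod p, v) * D $$ (v, j mod s))"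
    by (simp add: sum_product)
  also have "\<dots> = kron (A * C) (B * D) $$ (i,j)"
    using A B C D i' j' ip jp by (simp add: scalar_prod_def atLeast0LessThan)
  finally show "(kron A B * kron C D) $$ (i,j) = kron (A * C) (B * D) $$ (i,j)" .
qed (use A B C D in auto)

lemma kron_add_left:
  assumes "A \<in> carrier_mat m n" "B \<in> carrier_mat m n"
  shows "kron (A + B) C = kron A C + kron B C"
  using assms by (intro eq_matI) (auto simp: distrib_right div_lt_h mod_lt_h)

lemma kron_add_right:
  assumes "B \<in> carrier_mat m n" "C \<in> carrier_mat m n"
  shows "kron A (B + C) = kron A B + kron A C"
  using assms by (intro eq_matI) (auto simp: distrib_left div_lt_h mod_lt_h)

lemma kron_zero_left: "kron (0\<^sub>m m n) B = 0\<^sub>m (m * dim_row B) (n * dim_col B)"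
  by (intro eq_matI) (auto simp: less_mult_imp_div_less)



lemma less4: "(i::nat) < 4 \<longleftrightarrow> i = 0 \<or> i = 1 \<or> i = 2 \<or> i = 3" by auto
lemma sum4: "(\<Sum>k\<in>{0..<4::nat}. f k) = f 0 + f 1 + f 2 + f 3"
  by (simp add: numeral_eq_Suc add.assoc)

definition Hp :: "'a::comm_ring_1 \<Rightarrow> 'a \<Rightarrow> 'a \<Rightarrow> 'a \<Rightarrow> 'a \<Rightarrow> 'a \<Rightarrow> 'a \<Rightarrow> 'a mat" where
  "Hp p1 p2 q1 q2 r1 r2 C = mf22 (mat22 0 0 (- (p1*C)) (- p2)) (mat22 q2 0 (- (q1*C)) 0)"

definition m4 :: "'a list list \<Rightarrow> 'a mat" where "m4 xs = mat 4 4 (\<lambda>(i,j). xs ! i ! j)"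

lemma mf22_m4: "mf22 (mat22 a b c d) (mat22 e f g h) = m4 [[0,0,a,b],[0,0,c,d],[e,f,0,0],[g,h,0,0]]"
  unfolding mf22_def mat22_def m4_def
  by (rule eq_matI) (auto simp: less4 four_block_mat_def)

lemma mor22_m4: "mor22 (mat22 a b c d) (mat22 e f g h) = m4 [[a,b,0,0],[c,d,0,0],[0,0,e,f],[0,0,g,h]]"
  unfolding mor22_def mat22_def m4_def
  by (rule eq_matI) (auto simp: less4 four_block_mat_def)

lemma m4_mult: "m4 [[a00,a01,a02,a03],[a10,a11,a12,a13],[a20,a21,a22,a23],[a30,a31,a32,a33]] *
  m4 [[b00,b01,b02,b03],[b10,b11,b12,b13],[b20,b21,b22,b23],[b30,b31,b32,b33]] =
  m4 [[a00*b00+a01*b10+a02*b20+a03*b30, a00*b01+a01*b11+a02*b21+a03*b31, a00*b02+a01*b12+a02*b22+a03*b32, a00*b03+a01*b13+a02*b23+a03*b33],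
      [a10*b00+a11*b10+a12*b20+a13*b30, a10*b01+a11*b11+a12*b21+a13*b31, a10*b02+a11*b12+a12*b22+a13*b32, a10*b03+a11*b13+a12*b23+a13*b33],
      [a20*b00+a21*b10+a22*b20+a23*b30, a20*b01+a21*b11+a22*b21+a23*b31, a20*b02+a21*b12+a22*b22+a23*b32, a20*b03+a21*b13+a22*b23+a23*b33],
      [a30*b00+a31*b10+a32*b20+a33*b30, a30*b01+a31*b11+a32*b21+a33*b31, a30*b02+a31*b12+a32*b22+a33*b32, a30*b03+a31*b13+a32*b23+a33*b33::'a::semiring_0]]"
  unfolding m4_def
  by (rule eq_matI) (auto simp: less4 scalar_prod_def sum4)

lemma m4_add: "m4 [[a00,a01,a02,a03],[a10,a11,a12,a13],[a20,a21,a22,a23],[a30,a31,a32,a33]] +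
  m4 [[b00,b01,b02,b03],[b10,b11,b12,b13],[b20,b21,b22,b23],[b30,b31,b32,b33]] =
  m4 [[a00+b00,a01+b01,a02+b02,a03+b03],[a10+b10,a11+b11,a12+b12,a13+b13],[a20+b20,a21+b21,a22+b22,a23+b23],[a30+b30,a31+b31,a32+b32,a33+b33::'a::plus]]"
  unfolding m4_def
  by (rule eq_matI) (auto simp: less4)

lemma m4_eq: "(m4 xs = m4 ys) \<longleftrightarrow> (\<forall>i<4. \<forall>j<4. xs ! i ! j = ys ! i ! j)"
  unfolding m4_def
  by (auto simp: mat_eq_iff)

lemma loc: fixes p1 p2 q1 q2 r1 r2 C :: "'a::comm_ring_1"
  shows "Gsad_p p1 p2 q1 q2 r1 r2 C * Fsad_p p1 p2 q1 q2 r1 r2 C =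
    ghor_p p1 p2 q1 q2 r1 r2 C * Hp p1 p2 q1 q2 r1 r2 C + Hp p1 p2 q1 q2 r1 r2 C * gpar_p p1 p2 q1 q2 r1 r2 C"
  unfolding Gsad_p_def Fsad_p_def ghor_p_def gpar_p_def Hp_def mor22_m4 mf22_m4 m4_mult m4_add
  by (simp only: m4_eq less4 imp_conjL disj_imp all_conj_distrib simp_thms nth_Cons_0 nth_Cons_numeral nth_Cons_Suc numeral_eq_Suc Suc_1[symmetric]) (simp add: algebra_simps power2_eq_square)

lemma gsign_m4: "gsign 4 par_koszul2 = (m4 [[1,0,0,0],[0,-1,0,0],[0,0,-1,0],[0,0,0,1]] :: 'a::comm_ring_1 mat)"
  unfolding gsign_def m4_def
  by (rule eq_matI) (auto simp: less4 par_koszul2_def tensor_par_def par_koszul1_def)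

lemma koszul2_m4: "koszul2 a1 b1 a2 b2 = (m4 [[0,a2,a1,0],[b2,0,0,a1],[b1,0,0,-a2],[0,b1,-b2,0]] :: 'a::comm_ring_1 mat)"
  unfolding koszul2_def tensor_D_def koszul1_def m4_def
  by (rule eq_matI) (auto simp: less4 kron_def gsign_def par_koszul1_def)

lemma one4_m4: "(1\<^sub>m 4 :: 'a::comm_ring_1 mat) = m4 [[1,0,0,0],[0,1,0,0],[0,0,1,0],[0,0,0,1]]"
  unfolding m4_def by (rule eq_matI) (auto simp: less4)

lemma zero4_m4: "(0\<^sub>m 4 4 :: 'a::comm_ring_1 mat) = m4 [[0,0,0,0],[0,0,0,0],[0,0,0,0],[0,0,0,0]]"
  unfolding m4_def by (rule eq_matI) (auto simp: less4)

lemma EE: "gsign 4 par_koszul2 * gsign 4 par_koszul2 = (1\<^sub>m 4 :: 'a::comm_ring_1 mat)"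
  unfolding gsign_m4 one4_m4 m4_mult
  by (simp only: m4_eq less4 imp_conjL disj_imp all_conj_distrib simp_thms nth_Cons_0 nth_Cons_numeral nth_Cons_Suc numeral_eq_Suc Suc_1[symmetric]) simp

lemma KE: "koszul2 a1 b1 a2 b2 * gsign 4 par_koszul2 + gsign 4 par_koszul2 * koszul2 a1 b1 a2 b2 = (0\<^sub>m 4 4 :: 'a::comm_ring_1 mat)"
  unfolding gsign_m4 koszul2_m4 zero4_m4 m4_mult m4_add
  by (simp only: m4_eq less4 imp_conjL disj_imp all_conj_distrib simp_thms nth_Cons_0 nth_Cons_numeral nth_Cons_Suc numeral_eq_Suc Suc_1[symmetric]) simp

lemma m4_index: "i < 4 \<Longrightarrow> j < 4 \<Longrightarrow> m4 xs $$ (i,j) = xs ! i ! j"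
  by (simp add: m4_def)


fun hs :: "nat \<Rightarrow> 'a::comm_ring_1 list \<Rightarrow> 'a" where
  "hs 0 xs = 1"
| "hs (Suc k) [] = 0"
| "hs (Suc k) (x # xs) = hs (Suc k) xs + x * hs k (x # xs)"

lemma hs_single: "hs k [a] = a ^ k"
  by (induction k) auto

lemma hs_diff: "hs (Suc k) (T @ b # S) - hs (Suc k) (T @ c # S) = (b - c) * hs k (T @ b # c # S)"
proof (induction T arbitrary: k)
  case Nil
  show ?case
  proof (induction k)
    case 0
    then show ?case by simp
  next
    case (Suc k)
    have "(b - c) * hs (Suc k) ([] @ b # c # S) = (b - c) * hs (Suc k) (c # S) + b * ((b - c) * hs k (b # c # S))"
      by (simp add: algebra_simps)
    also have "\<dots> = (b - c) * hs (Suc k) (c # S) + b * (hs (Suc k) (b # S) - hs (Suc k) (c # S))"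
      using Suc by simp
    also have "\<dots> = hs (Suc (Suc k)) ([] @ b # S) - hs (Suc (Suc k)) ([] @ c # S)"
      by (simp add: algebra_simps)
    finally show ?case by simp
  qed
next
  case (Cons t T)
  show ?case
  proof (induction k)
    case 0
    then show ?case using Cons.IH[of 0] by simp
  next
    case (Suc k)
    have "hs (Suc (Suc k)) ((t # T) @ b # S) - hs (Suc (Suc k)) ((t # T) @ c # S)
      = (hs (Suc (Suc k)) (T @ b # S) - hs (Suc (Suc k)) (T @ c # S))
        + t * (hs (Suc k) ((t # T) @ b # S) - hs (Suc k) ((t # T) @ c # S))"
      by (simp add: algebra_simps)
    also have "\<dots> = (b - c) * hs (Suc k) (T @ b # c # S) + t * ((b - c) * hs k ((t # T) @ b # c # S))"
      using Suc Cons.IH[of "Suc k"] by simp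
    also have "\<dots> = (b - c) * hs (Suc k) ((t # T) @ b # c # S)"
      by (simp add: algebra_simps)
    finally show ?case .
  qed
qed

lemma divq_eq: "d \<noteq> 0 \<Longrightarrow> d * q = n \<Longrightarrow> divq n d = q"
  unfolding divq_def
  by (rule someI2[where a=q]) auto

lemma wd1_hs: "wd1 N a = hs (2 * N + 1) [a]"
  by (simp add: wd1_def hs_single)

lemma wd2_hs: "a \<noteq> b \<Longrightarrow> wd2 N a b = hs (2 * N) [a, b]"
  unfolding wd2_def wd1_hs
  by (rule divq_eq) (use hs_diff[of "2*N" "[]" a "[]" b] in auto)

lemma wd3_hs: "a \<noteq> b \<Longrightarrow> a \<noteq> c \<Longrightarrow> b \<noteq> c \<Longrightarrow> N \<ge> 1 \<Longrightarrow> wd3 N a b c = hs (2 * N - 1) [a, b, c]"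
  unfolding wd3_def
  apply (simp add: wd2_hs)
  apply (rule divq_eq)
  using hs_diff[of "2*N-1" "[a]" b "[]" c] by auto

lemma wd4_hs: "a \<noteq> b \<Longrightarrow> a \<noteq> c \<Longrightarrow> a \<noteq> d \<Longrightarrow> b \<noteq> c \<Longrightarrow> b \<noteq> d \<Longrightarrow> c \<noteq> d \<Longrightarrow> N \<ge> 1 \<Longrightarrow>
  wd4 N a b c d = hs (2 * N - 2) [a, b, c, d]"
  unfolding wd4_def
  apply (simp add: wd3_hs)
  apply (rule divq_eq)
  using hs_diff[of "2*N-2" "[a,b]" c "[]" d] by (auto simp: Suc_diff_Suc numeral_2_eq_2)

lemma in_R_add: "in_R f \<Longrightarrow> in_R g \<Longrightarrow> in_R (f + g)"
  unfolding in_R_def using keys_add[of f g] by blast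
lemma in_R_uminus: "in_R f \<Longrightarrow> in_R (- f)"
  unfolding in_R_def by simp
lemma in_R_diff: "in_R f \<Longrightarrow> in_R g \<Longrightarrow> in_R (f - g)"
  unfolding in_R_def using keys_diff[of f g] by blast
lemma in_R_mult: "in_R f \<Longrightarrow> in_R g \<Longrightarrow> in_R (f * g)"
  unfolding in_R_def
proof
  fix m assume f: "\<forall>m\<in>Poly_Mapping.keys f. Poly_Mapping.keys m \<subseteq> {..<8}"
    and g: "\<forall>m\<in>Poly_Mapping.keys g. Poly_Mapping.keys m \<subseteq> {..<8}"
    and m: "m \<in> Poly_Mapping.keys (f * g)"
  then obtain a b where "m = a + b" "a \<in> Poly_Mapping.keys f" "b \<in> Poly_Mapping.keys g"
    using keys_mult[of f g] by blast
  then show "Poly_Mapping.keys m \<subseteq> {..<8}" using f g keys_add[of a b] by blast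
qed
lemma in_R_0: "in_R 0" by (simp add: in_R_def)
lemma in_R_1: "in_R 1" by (simp add: in_R_def)
lemma in_R_Var: "i < 8 \<Longrightarrow> in_R (Var i)" by (simp add: in_R_def Var_def)
lemma in_R_xv: "1 \<le> i \<Longrightarrow> i \<le> 4 \<Longrightarrow> in_R (xv i)" by (simp add: xv_def in_R_Var)
lemma in_R_yv: "i \<le> 4 \<Longrightarrow> in_R (yv i)" by (simp add: yv_def in_R_Var)

lemma in_R_hs: "(\<forall>x\<in>set xs. in_R x) \<Longrightarrow> in_R (hs k xs)"
  by (induction k xs rule: hs.induct) (auto simp: in_R_1 in_R_0 in_R_add in_R_mult)

lemma lookup_Var: "Poly_Mapping.lookup (Var i) (Poly_Mapping.single j (Suc 0)) = (if i = j then 1 else 0)"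
proof -
  have "Poly_Mapping.single i (Suc 0) = Poly_Mapping.single j (Suc 0) \<longleftrightarrow> i = j"
  proof
    assume "Poly_Mapping.single i (Suc 0) = Poly_Mapping.single j (Suc 0)"
    then have "Poly_Mapping.lookup (Poly_Mapping.single i (Suc 0)) i = Poly_Mapping.lookup (Poly_Mapping.single j (Suc 0)) i" by simp
    then show "i = j" by (auto simp: lookup_single when_def split: if_splits)
  qed simp
  then show ?thesis by (auto simp: Var_def lookup_single when_def)
qed

lemma nz: "Poly_Mapping.lookup (f::R) m \<noteq> 0 \<Longrightarrow> f \<noteq> 0" by auto

lemma phiC_in_R: "N \<ge> 1 \<Longrightarrow> in_R (phiC N)"
proof -
  assume N: "N \<ge> 1"
  let ?l = "\<lambda>f::R. \<lambda>i. Poly_Mapping.lookup f (Poly_Mapping.single i (Suc 0))"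
  have ne: "a - b \<noteq> 0 \<Longrightarrow> a \<noteq> b" for a b :: R by auto
  have x1: "?l (xv i) j = (if i - 1 = j then 1 else 0)" for i j unfolding xv_def lookup_Var by simp
  note L = lookup_add lookup_minus lookup_uminus x1
  have d0: "xv 1 \<noteq> xv 2"
    by (rule ne, rule nz[where m="Poly_Mapping.single 0 (Suc 0)"], simp add: L)
  have d1: "xv 1 \<noteq> - xv 3"
    by (rule ne, rule nz[where m="Poly_Mapping.single 0 (Suc 0)"], simp add: L)
  have d2: "xv 1 \<noteq> xv 4"
    by (rule ne, rule nz[where m="Poly_Mapping.single 0 (Suc 0)"], simp add: L)
  have d3: "xv 2 \<noteq> - xv 3"
    by (rule ne, rule nz[where m="Poly_Mapping.single 1 (Suc 0)"], simp add: L)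
  have d4: "xv 2 \<noteq> xv 4"
    by (rule ne, rule nz[where m="Poly_Mapping.single 1 (Suc 0)"], simp add: L)
  have d5: "- xv 3 \<noteq> xv 4"
    by (rule ne, rule nz[where m="Poly_Mapping.single 2 (Suc 0)"], simp add: L)
  have d6: "xv 1 \<noteq> - xv 1"
    by (rule ne, rule nz[where m="Poly_Mapping.single 0 (Suc 0)"], simp only: diff_minus_eq_add minus_minus lookup_add x1, simp)
  have d7: "xv 1 \<noteq> - xv 2"
    by (rule ne, rule nz[where m="Poly_Mapping.single 0 (Suc 0)"], simp add: L)
  have d8: "- xv 1 \<noteq> xv 2"
    by (rule ne, rule nz[where m="Poly_Mapping.single 0 (Suc 0)"], simp add: L)
  have d9: "- xv 1 \<noteq> - xv 2"
    by (rule ne, rule nz[where m="Poly_Mapping.single 0 (Suc 0)"], simp add: L)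
  have d10: "- xv 1 \<noteq> xv 4"
    by (rule ne, rule nz[where m="Poly_Mapping.single 0 (Suc 0)"], simp add: L)
  have d11: "- xv 2 \<noteq> xv 4"
    by (rule ne, rule nz[where m="Poly_Mapping.single 1 (Suc 0)"], simp add: L)
  note d = d0 d1 d2 d3 d4 d5 d6 d7 d8 d9 d10 d11
  have e1: "wd4 N (xv 1) (xv 2) (- xv 3) (xv 4) = hs (2 * N - 2) [xv 1, xv 2, - xv 3, xv 4]"
    by (rule wd4_hs) (use d N in auto)
  have e2: "wd4 N (xv 1) (- xv 1) (xv 2) (xv 4) = hs (2 * N - 2) [xv 1, - xv 1, xv 2, xv 4]"
    by (rule wd4_hs) (use d N in auto)
  have e3: "wd4 N (xv 1) (- xv 1) (- xv 2) (xv 4) = hs (2 * N - 2) [xv 1, - xv 1, - xv 2, xv 4]"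
    by (rule wd4_hs) (use d N in auto)
  have xs: "in_R (xv 1)" "in_R (xv 2)" "in_R (xv 3)" "in_R (xv 4)" by (simp_all add: in_R_xv)
  show ?thesis
    unfolding phiC_def e1 e2 e3
    by (intro in_R_add in_R_hs) (auto simp: in_R_uminus in_R_xv)
qed

lemma mat22_carrier[simp]: "mat22 a b c d \<in> carrier_mat 2 2" by (simp add: mat22_def)
lemma mf22_carrier[simp]: "mf22 (mat22 a b c d) (mat22 e f g h) \<in> carrier_mat 4 4"
  unfolding carrier_mat_def by (simp add: mf22_def mat22_def)
lemma mor22_carrier[simp]: "mor22 (mat22 a b c d) (mat22 e f g h) \<in> carrier_mat 4 4"
  unfolding carrier_mat_def by (simp add: mor22_def mat22_def)
lemma koszul2_carrier[simp]: "koszul2 a b c d \<in> carrier_mat 4 4"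
  unfolding carrier_mat_def by (simp add: koszul2_def tensor_D_def koszul1_def gsign_def)
lemma gsign_carrier[simp]: "gsign n par \<in> carrier_mat n n" by (simp add: gsign_def)

lemma bc_carrier[simp]:
  "base_change gpar_p N \<in> carrier_mat 4 4" "base_change ghor_p N \<in> carrier_mat 4 4"
  "base_change Fsad_p N \<in> carrier_mat 4 4" "base_change Gsad_p N \<in> carrier_mat 4 4"
  "base_change Hp N \<in> carrier_mat 4 4"
  by (simp_all add: base_change_def gpar_p_def ghor_p_def Fsad_p_def Gsad_p_def Hp_def)

lemma K_carrier[simp]: "K_cmn N \<in> carrier_mat 4 4" by (simp add: K_cmn_def)

lemma KE_cmn: "K_cmn N * gsign 4 par_koszul2 + gsign 4 par_koszul2 * K_cmn N = 0\<^sub>m 4 4"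
  unfolding K_cmn_def by (rule KE)

lemma D_total_eq: "D_total N gp = kron (K_cmn N) (1\<^sub>m 4) + kron (gsign 4 par_koszul2) (base_change gp N)"
  if "base_change gp N \<in> carrier_mat 4 4"
  using that unfolding D_total_def tensor_D_def by (simp add: carrier_matD[OF that] carrier_matD[OF K_carrier])

lemma H_in_R: "N \<ge> 1 \<Longrightarrow> a < 4 \<Longrightarrow> b < 4 \<Longrightarrow> in_R (base_change Hp N $$ (a, b))"
  using phiC_in_R[of N]
  unfolding less4
  by (elim disjE) (simp_all add: base_change_def Hp_def mf22_m4 m4_def
     in_R_0 in_R_mult in_R_add in_R_diff in_R_uminus in_R_xv in_R_yv)

lemma H_odd: "a < 4 \<Longrightarrow> b < 4 \<Longrightarrow> par22 a = par22 b \<Longrightarrow> base_change Hp N $$ (a, b) = 0"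
  unfolding less4 par22_def
  by (elim disjE) (simp_all add: base_change_def Hp_def mf22_m4 m4_def)

lemma E_in_R: "a < 4 \<Longrightarrow> b < 4 \<Longrightarrow> in_R (gsign 4 par_koszul2 $$ (a, b) :: R)"
  by (simp add: gsign_def in_R_0 in_R_1 in_R_uminus)

lemma add4_rearr: "(A :: R mat) \<in> carrier_mat n m \<Longrightarrow> B \<in> carrier_mat n m \<Longrightarrow> C \<in> carrier_mat n m \<Longrightarrow> D \<in> carrier_mat n m \<Longrightarrow>
  (A + B) + (C + D) = (A + C) + (B + D)"
  by (intro eq_matI) (auto simp: ac_simps)

theorem mainTheorem4:
  fixes N :: nat
  assumes "1 \<le> N"
  shows "null_homotopic 16 par_total (D_total N gpar_p) (D_total N ghor_p) (G_sad N * F_sad N)"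
proof -
  define K where "K = K_cmn N"
  define E where "E = (gsign 4 par_koszul2 :: R mat)"
  define H where "H = base_change Hp N"
  define Pp where "Pp = base_change gpar_p N"
  define Ph where "Ph = base_change ghor_p N"
  define Gb where "Gb = base_change Gsad_p N"
  define Fb where "Fb = base_change Fsad_p N"
  define I where "I = (1\<^sub>m 4 :: R mat)"
  define X where "X = kron E H"
  have c: "K \<in> carrier_mat 4 4" "E \<in> carrier_mat 4 4" "H \<in> carrier_mat 4 4" "Pp \<in> carrier_mat 4 4"
    "Ph \<in> carrier_mat 4 4" "Gb \<in> carrier_mat 4 4" "Fb \<in> carrier_mat 4 4" "I \<in> carrier_mat 4 4"
    by (simp_all add: K_def E_def H_def Pp_def Ph_def Gb_def Fb_def I_def)
  have loc': "Gb * Fb = Ph * H + H * Pp"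
    unfolding Gb_def Fb_def Ph_def H_def Pp_def base_change_def by (rule loc)
  have EE': "E * E = I" unfolding E_def I_def by (rule EE)
  have KE': "K * E + E * K = 0\<^sub>m 4 4" unfolding K_def E_def by (rule KE_cmn)
  have Xc: "X \<in> carrier_mat 16 16" unfolding X_def using c by auto
  have lhs: "G_sad N * F_sad N = kron I (Gb * Fb)"
    unfolding G_sad_def F_sad_def Gb_def[symmetric] Fb_def[symmetric] I_def[symmetric]
    using kron_mult[OF c(8) c(6) c(8) c(7)] c by (simp add: I_def)
  have Dp: "D_total N gpar_p = kron K I + kron E Pp"
    unfolding K_def E_def Pp_def I_def by (rule D_total_eq) simp
  have Dh: "D_total N ghor_p = kron K I + kron E Ph"
    unfolding K_def E_def Ph_def I_def by (rule D_total_eq) simp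
  have kc: "kron A B \<in> carrier_mat 16 16" if "A \<in> carrier_mat 4 4" "B \<in> carrier_mat 4 4" for A B :: "R mat"
    using that by auto
  have r1: "D_total N ghor_p * X = kron (K * E) H + kron I (Ph * H)"
  proof -
    have "D_total N ghor_p * X = kron K I * kron E H + kron E Ph * kron E H"
      unfolding Dh X_def using c kc by (intro add_mult_distrib_mat) auto
    also have "\<dots> = kron (K * E) (I * H) + kron (E * E) (Ph * H)"
      using c by (simp add: kron_mult)
    finally show ?thesis using c EE' by (simp add: I_def)
  qed
  have r2: "X * D_total N gpar_p = kron (E * K) H + kron I (H * Pp)"
  proof -
    have "X * D_total N gpar_p = kron E H * kron K I + kron E H * kron E Pp"
      unfolding Dp X_def using c kc by (intro mult_add_distrib_mat) auto
    also have "\<dots> = kron (E * K) (H * I) + kron (E * E) (H * Pp)"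
      using c by (simp add: kron_mult)
    finally show ?thesis using c EE' by (simp add: I_def)
  qed
  have eq: "G_sad N * F_sad N = D_total N ghor_p * X + X * D_total N gpar_p"
  proof -
    have "D_total N ghor_p * X + X * D_total N gpar_p
       = (kron (K * E) H + kron (E * K) H) + (kron I (Ph * H) + kron I (H * Pp))"
      unfolding r1 r2 using c by (intro add4_rearr kc) auto
    also have "\<dots> = kron (K * E + E * K) H + kron I (Ph * H + H * Pp)"
      using c by (simp add: kron_add_left[of _ 4 4] kron_add_right[of _ 4 4])
    also have "\<dots> = 0\<^sub>m 16 16 + kron I (Gb * Fb)"
      using c by (simp add: KE' kron_zero_left loc')
    also have "\<dots> = kron I (Gb * Fb)"
      by (rule left_add_zero_mat) (use c kc in auto)
    finally show ?thesis using lhs by simp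
  qed
  show ?thesis
    unfolding null_homotopic_def
  proof (intro bexI conjI allI impI)
    show "X \<in> carrier_mat 16 16" by (rule Xc)
    show "G_sad N * F_sad N = D_total N ghor_p * X + X * D_total N gpar_p" by (rule eq)
  next
    fix i j :: nat assume i: "i < 16" and j: "j < 16"
    have ij: "i div 4 < 4" "i mod 4 < 4" "j div 4 < 4" "j mod 4 < 4" using i j by auto
    have Xij: "X $$ (i, j) = E $$ (i div 4, j div 4) * H $$ (i mod 4, j mod 4)"
      unfolding X_def using c i j by simp
    show "in_R (X $$ (i, j))"
      unfolding Xij E_def H_def using ij assms by (intro in_R_mult E_in_R H_in_R)
    {
      assume p: "par_total i = par_total j"
      show "X $$ (i, j) = 0"
      proof (cases "i div 4 = j div 4")
        case False
        then show ?thesis unfolding Xij E_def using ij by (simp add: gsign_def)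
      next
        case True
        then have "par22 (i mod 4) = par22 (j mod 4)" using p
          by (auto simp: par_total_def tensor_par_def)
        then show ?thesis unfolding Xij H_def using ij by (simp add: H_odd)
      qed
    }
  qed
qed

end
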